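(* Let $d$ be a positive integer, $0\le\kappa<d$ real, and $K>0$. Let $\tau,\eta>0$ be constants, and for a positive integer $N$ put $r=\eta(\log N)^{\frac{d\kappa}{d-\kappa}}$ (taken to be an integer) and let $\mathcal{P}_I$ be the set of primes in $I=[\tau(\log N)^{\frac{d}{d-\kappa}},2\tau(\log N)^{\frac{d}{d-\kappa}}]$. Let $S\subseteq[N]^d$ be nonempty and occupy at most $Kp^{\kappa}$ residue classes modulo $p$ for every $p\in\mathcal{P}_I$. There is a constant $C_1$ (depending only on $K$ and $\kappa$) such that if $\eta\ge C_1\tau^{\kappa}$, then there exists $c>0$ (independent of $N$, $S$ and $p$) such that for all sufficiently large $N$ and every prime $p\in\mathcal{P}_I$, there are at least $c|S|^{r+1}$ tuples $(x,L)\in S\times S^r$ that are good mod $p$.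
   Context: A tuple $(x,L)\in S\times S^r$, with $L=(\ell_1,\ldots,\ell_r)$, is called good mod $p$ if $x\equiv \ell_i \pmod p$ (coordinatewise) for some $i$, and bad otherwise. $S^r$ denotes the set of ordered $r$-tuples of elements of $S$. *)

theory Defs
  imports "HOL-Number_Theory.Number_Theory"
begin

text \<open>Points of [N]^d are represented as functions nat => int that take values
in {1..N} on coordinates 0..d-1 and vanish on all other coordinates.\<close>
definition grid :: "nat \<Rightarrow> nat \<Rightarrow> (nat \<Rightarrow> int) set" where
  "grid d N = {x. (\<forall>i<d. x i \<in> {1..int N}) \<and> (\<forall>i\<ge>d. x i = 0)}"

definition res_class :: "nat \<Rightarrow> nat \<Rightarrow> (nat \<Rightarrow> int) \<Rightarrow> (nat \<Rightarrow> int)" where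
  "res_class d p x = (\<lambda>i. if i < d then x i mod int p else 0)"

definition num_classes :: "nat \<Rightarrow> nat \<Rightarrow> (nat \<Rightarrow> int) set \<Rightarrow> nat" where
  "num_classes d p S = card (res_class d p ` S)"

definition cong_vec :: "nat \<Rightarrow> nat \<Rightarrow> (nat \<Rightarrow> int) \<Rightarrow> (nat \<Rightarrow> int) \<Rightarrow> bool" where
  "cong_vec d p x y \<longleftrightarrow> (\<forall>j<d. [x j = y j] (mod int p))"

definition good :: "nat \<Rightarrow> nat \<Rightarrow> nat \<Rightarrow> (nat \<Rightarrow> int) \<Rightarrow> (nat \<Rightarrow> (nat \<Rightarrow> int)) \<Rightarrow> bool" where
  "good d r p x L \<longleftrightarrow> (\<exists>i<r. cong_vec d p x (L i))"

definition tuples :: "nat \<Rightarrow> 'a set \<Rightarrow> (nat \<Rightarrow> 'a) set" where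
  "tuples r S = {..<r} \<rightarrow>\<^sub>E S"

definition r_param :: "nat \<Rightarrow> real \<Rightarrow> real \<Rightarrow> nat \<Rightarrow> nat" where
  "r_param d \<kappa> \<eta> N = nat \<lfloor>\<eta> * ln (real N) powr (real d * \<kappa> / (real d - \<kappa>))\<rfloor>"

definition primes_I :: "nat \<Rightarrow> real \<Rightarrow> real \<Rightarrow> nat \<Rightarrow> nat set" where
  "primes_I d \<kappa> \<tau> N = {p. prime p \<and>
      \<tau> * ln (real N) powr (real d / (real d - \<kappa>)) \<le> real p \<and>
      real p \<le> 2 * \<tau> * ln (real N) powr (real d / (real d - \<kappa>))}"

end

theory Submission
  imports Defs "HOL-Library.FuncSet"
begin

lemma bern_aux:
  fixes n b :: real
  assumes "0 \<le> b" "b \<le> n"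
  shows "(n-b)^r*(n + real r*b) \<le> n^(r+1)"
proof (induction r)
  case 0 then show ?case by simp
next
  case (Suc r)
  have nb: "0 \<le> n - b" using assms by simp
  have "(n-b)^(Suc r)*(n + real (Suc r)*b) = (n-b)^r * ((n-b)*(n+real r*b+b))" by (simp add: algebra_simps)
  also have "(n-b)*(n+real r*b+b) = n*(n+real r*b) - (real r+1)*b^2" by (simp add: algebra_simps power2_eq_square)
  also have "\<dots> \<le> n*(n+real r*b)" using assms by simp
  finally have "(n-b)^(Suc r)*(n + real (Suc r)*b) \<le> (n-b)^r * (n*(n+real r*b))"
    by (meson mult_left_mono nb zero_le_power order_trans)
  also have "\<dots> = n * ((n-b)^r*(n+real r*b))" by simp
  also have "\<dots> \<le> n * n^(r+1)" using Suc assms by (intro mult_left_mono) auto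
  finally show ?case by simp
qed

lemma comb:
  fixes S :: "'a set" and h :: "'a \<Rightarrow> 'b"
  assumes fin: "finite S" and ne: "S \<noteq> {}" and rm: "real r \<ge> 2 * real (card (h ` S))"
  shows "real (card {(x,L). x\<in>S \<and> L \<in> {..<r} \<rightarrow>\<^sub>E S \<and> (\<exists>i<r. h (L i) = h x)}) \<ge> 1/2 * real (card S)^(r+1)"
proof -
  define n where "n = card S"
  define B where "B x = {y\<in>S. h y = h x}" for x
  define m where "m = card (h ` S)"
  have m1: "m \<ge> 1" using fin ne unfolding m_def by (simp add: Suc_le_eq card_gt_0_iff)
  have r0: "real r > 0" using rm m1 unfolding m_def by simp
  have n0: "real n > 0" using fin ne unfolding n_def by (simp add: card_gt_0_iff)
  have setq: "{(x,L). x\<in>S \<and> L \<in> {..<r} \<rightarrow>\<^sub>E S \<and> (\<exists>i<r. h (L i) = h x)}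
     = Sigma S (\<lambda>x. ({..<r} \<rightarrow>\<^sub>E S) - ({..<r} \<rightarrow>\<^sub>E (S - B x)))"
  proof (intro Set.set_eqI iffI)
    fix z assume "z \<in> {(x,L). x\<in>S \<and> L \<in> {..<r} \<rightarrow>\<^sub>E S \<and> (\<exists>i<r. h (L i) = h x)}"
    then obtain x L i where z: "z = (x,L)" "x \<in> S" "L \<in> {..<r} \<rightarrow>\<^sub>E S" "i < r" "h (L i) = h x" by blast
    then have "L \<notin> {..<r} \<rightarrow>\<^sub>E (S - B x)" unfolding B_def by (auto simp: PiE_iff)
    with z show "z \<in> Sigma S (\<lambda>x. ({..<r} \<rightarrow>\<^sub>E S) - ({..<r} \<rightarrow>\<^sub>E (S - B x)))" by blast
  next
    fix z assume "z \<in> Sigma S (\<lambda>x. ({..<r} \<rightarrow>\<^sub>E S) - ({..<r} \<rightarrow>\<^sub>E (S - B x)))"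
    then obtain x L where z: "z = (x,L)" "x \<in> S" "L \<in> {..<r} \<rightarrow>\<^sub>E S" "L \<notin> {..<r} \<rightarrow>\<^sub>E (S - B x)" by blast
    then obtain i where "i < r" "L i \<notin> S - B x" by (auto simp: PiE_iff)
    with z have "i < r" "h (L i) = h x" unfolding B_def by (auto simp: PiE_iff)
    with z show "z \<in> {(x,L). x\<in>S \<and> L \<in> {..<r} \<rightarrow>\<^sub>E S \<and> (\<exists>i<r. h (L i) = h x)}" by blast
  qed
  have finB: "finite (B x)" for x using fin unfolding B_def by simp
  have BS: "B x \<subseteq> S" for x unfolding B_def by auto
  have cardx: "real (card (({..<r} \<rightarrow>\<^sub>E S) - ({..<r} \<rightarrow>\<^sub>E (S - B x)))) = real n ^ r - (real n - real (card (B x)))^r" for x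
  proof -
    have sub: "({..<r} \<rightarrow>\<^sub>E (S - B x)) \<subseteq> ({..<r} \<rightarrow>\<^sub>E S)" by (auto simp: PiE_iff)
    have f: "finite ({..<r} \<rightarrow>\<^sub>E (S - B x))" using fin by (simp add: finite_PiE)
    have "card (({..<r} \<rightarrow>\<^sub>E S) - ({..<r} \<rightarrow>\<^sub>E (S - B x))) = card ({..<r} \<rightarrow>\<^sub>E S) - card ({..<r} \<rightarrow>\<^sub>E (S - B x))"
      using card_Diff_subset[OF f sub] .
    moreover have "card ({..<r} \<rightarrow>\<^sub>E (S - B x)) \<le> card ({..<r} \<rightarrow>\<^sub>E S)"
      using fin sub by (intro card_mono) (auto simp: finite_PiE)
    moreover have "card ({..<r} \<rightarrow>\<^sub>E (S - B x)) = (n - card (B x))^r"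
      by (simp add: card_funcsetE card_Diff_subset[OF finB BS] n_def)
    moreover have "card ({..<r} \<rightarrow>\<^sub>E S) = n^r" by (simp add: card_funcsetE n_def)
    moreover have "card (B x) \<le> n" using card_mono[OF fin BS] n_def by simp
    ultimately show ?thesis by (simp add: of_nat_diff)
  qed
  have total: "real (card {(x,L). x\<in>S \<and> L \<in> {..<r} \<rightarrow>\<^sub>E S \<and> (\<exists>i<r. h (L i) = h x)})
     = (\<Sum>x\<in>S. real n ^ r - (real n - real (card (B x)))^r)"
    unfolding setq using fin by (simp add: card_SigmaI finite_PiE of_nat_sum cardx del: of_nat_diff)
  have perx: "real n ^ r - (real n - real (card (B x)))^r \<ge> real n ^ r - real n ^ r * real n / real r * (1 / real (card (B x)))"
    if x: "x \<in> S" for x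
  proof -
    define b where "b = real (card (B x))"
    have "x \<in> B x" using x unfolding B_def by simp
    then have b1: "b \<ge> 1" unfolding b_def using finB[of x] by (simp add: Suc_le_eq card_gt_0_iff) (metis card_0_eq empty_iff finB)
    have bn: "b \<le> real n" unfolding b_def n_def using card_mono[OF fin BS] by simp
    have "(real n-b)^r*(real n + real r*b) \<le> real n^(r+1)" using bern_aux[of b "real n" r] b1 bn by simp
    then have "(real n-b)^r \<le> real n^(r+1) / (real n + real r*b)"
      using n0 r0 b1 by (subst le_divide_eq) (auto simp: mult.commute add_pos_pos)
    also have "\<dots> \<le> real n^(r+1) / (real r*b)"
      using n0 r0 b1 by (intro divide_left_mono) (auto intro!: mult_pos_pos add_pos_pos)
    also have "\<dots> = real n ^ r * real n / real r * (1 / b)" by simp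
    finally show ?thesis unfolding b_def by simp
  qed
  have sumB: "(\<Sum>x\<in>S. 1 / real (card (B x))) = real m"
  proof -
    have "(\<Sum>x\<in>S. 1 / real (card (B x))) = (\<Sum>y\<in>h ` S. \<Sum>x\<in>{x\<in>S. h x = y}. 1 / real (card (B x)))"
      using sum.image_gen[OF fin] .
    also have "\<dots> = (\<Sum>y\<in>h ` S. 1)"
    proof (rule sum.cong[OF refl])
      fix y assume "y \<in> h ` S"
      then have ne2: "{x\<in>S. h x = y} \<noteq> {}" by auto
      have "(\<Sum>x\<in>{x\<in>S. h x = y}. 1 / real (card (B x))) = (\<Sum>x\<in>{x\<in>S. h x = y}. 1 / real (card {x\<in>S. h x = y}))"
        by (rule sum.cong) (auto simp: B_def)
      also have "\<dots> = 1" using ne2 fin by simp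
      finally show "(\<Sum>x\<in>{x\<in>S. h x = y}. 1 / real (card (B x))) = 1" .
    qed
    finally show ?thesis by (simp add: m_def)
  qed
  have s1: "(\<Sum>x\<in>S. real n ^ r - (real n - real (card (B x)))^r) \<ge> (\<Sum>x\<in>S. real n ^ r - real n ^ r * real n / real r * (1 / real (card (B x))))"
    by (rule sum_mono) (use perx in auto)
  have s2: "(\<Sum>x\<in>S. real n ^ r - real n ^ r * real n / real r * (1 / real (card (B x)))) = real n * real n ^ r - real n ^ r * real n / real r * real m"
  proof -
    have "(\<Sum>x\<in>S. real n ^ r * real n / real r * (1 / real (card (B x)))) = real n ^ r * real n / real r * real m"
      by (simp only: sum_distrib_left[symmetric] sumB)
    then show ?thesis by (simp only: sum_subtractf) (simp add: n_def)
  qed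
  have s3: "real n * real n ^ r - real n ^ r * real n / real r * real m \<ge> 1/2 * real n ^(r+1)"
  proof -
    have "real m / real r \<le> 1/2" using rm r0 unfolding m_def by (simp add: field_simps)
    then have "real n ^ r * real n * (real m / real r) \<le> real n ^ r * real n * (1/2)"
      using n0 by (intro mult_left_mono) auto
    then show ?thesis by (simp add: field_simps)
  qed
  show ?thesis using s1 s2 s3 unfolding total n_def by linarith
qed

lemma good_iff: "good d r p x L \<longleftrightarrow> (\<exists>i<r. res_class d p (L i) = res_class d p x)"
  unfolding good_def cong_vec_def res_class_def cong_def
  by (auto simp: fun_eq_iff)

lemma param:
  fixes K \<kappa> \<tau> \<eta> :: real and d N p :: nat and S
  assumes K: "K > 0" and k0: "0 \<le> \<kappa>" and d: "d > 0" "\<kappa> < real d" and t: "\<tau> > 0"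
    and eta: "\<eta> \<ge> 4 * K * 2 powr \<kappa> * \<tau> powr \<kappa>"
    and p: "p \<in> primes_I d \<kappa> \<tau> N"
    and m: "real m \<le> K * real p powr \<kappa>" and m1: "m \<ge> 1"
  shows "real (r_param d \<kappa> \<eta> N) \<ge> 2 * real m"
proof -
  define L where "L = ln (real N)"
  define e where "e = real d / (real d - \<kappa>)"
  define X where "X = L powr (real d * \<kappa> / (real d - \<kappa>))"
  have L0: "L \<ge> 0" unfolding L_def by (cases "N = 0") auto
  have pp: "prime p" and pu: "real p \<le> 2 * \<tau> * L powr e" using p unfolding primes_I_def L_def e_def by auto
  have p2: "real p \<ge> 2" using prime_ge_2_nat[OF pp] by simp
  have Xe: "(L powr e) powr \<kappa> = X" unfolding X_def e_def by (simp add: powr_powr)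
  have X0: "X \<ge> 0" unfolding X_def by simp
  have "real p powr \<kappa> \<le> (2 * \<tau> * L powr e) powr \<kappa>"
    using pu p2 k0 by (intro powr_mono2) auto
  also have "\<dots> = 2 powr \<kappa> * \<tau> powr \<kappa> * X"
    using t L0 by (simp add: powr_mult Xe)
  finally have "real m \<le> K * (2 powr \<kappa> * \<tau> powr \<kappa> * X)"
    using m K by (meson mult_left_mono less_imp_le order_trans)
  moreover have "(4 * K * 2 powr \<kappa> * \<tau> powr \<kappa>) * X \<le> \<eta> * X"
    using eta X0 by (intro mult_right_mono) auto
  ultimately have "\<eta> * X \<ge> 4 * real m" by (simp add: algebra_simps)
  moreover have "real (r_param d \<kappa> \<eta> N) \<ge> \<eta> * X - 1"
  proof -
    have "\<eta> * X \<ge> 0" using \<open>\<eta> * X \<ge> 4 * real m\<close> by simp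
    then have "real (r_param d \<kappa> \<eta> N) = real_of_int \<lfloor>\<eta> * X\<rfloor>"
      unfolding r_param_def X_def L_def by simp
    then show ?thesis by linarith
  qed
  ultimately show ?thesis using m1 by simp
qed

theorem lemma3p2:
  fixes K \<kappa> :: real
  assumes "K > 0" and "0 \<le> \<kappa>"
  shows "\<exists>C1::real. \<forall>(d::nat) (\<tau>::real) (\<eta>::real).
     d > 0 \<longrightarrow> \<kappa> < real d \<longrightarrow> \<tau> > 0 \<longrightarrow> \<eta> > 0 \<longrightarrow> \<eta> \<ge> C1 * \<tau> powr \<kappa> \<longrightarrow>
     (\<exists>c::real. c > 0 \<and> (\<exists>N0::nat. \<forall>N\<ge>N0. \<forall>S.
        S \<subseteq> grid d N \<longrightarrow> S \<noteq> {} \<longrightarrow>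
        (\<forall>q\<in>primes_I d \<kappa> \<tau> N. real (num_classes d q S) \<le> K * real q powr \<kappa>) \<longrightarrow>
        (\<forall>p\<in>primes_I d \<kappa> \<tau> N.
           real (card {(x, L). x \<in> S \<and> L \<in> tuples (r_param d \<kappa> \<eta> N) S \<and>
                               good d (r_param d \<kappa> \<eta> N) p x L})
           \<ge> c * real (card S) ^ (r_param d \<kappa> \<eta> N + 1))))"
proof (rule exI[of _ "4 * K * 2 powr \<kappa>"], intro allI impI, rule exI[of _ "1/2::real"], rule conjI, simp, rule exI[of _ "0::nat"], intro allI impI ballI)
  fix d :: nat and \<tau> \<eta> :: real and N :: nat and S and p
  assume d: "0 < d" "\<kappa> < real d" and t: "0 < \<tau>" and "0 < \<eta>"
    and eta: "4 * K * 2 powr \<kappa> * \<tau> powr \<kappa> \<le> \<eta>"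
    and "S \<subseteq> grid d N" and ne: "S \<noteq> {}"
    and cls: "\<forall>q\<in>primes_I d \<kappa> \<tau> N. real (num_classes d q S) \<le> K * real q powr \<kappa>"
    and p: "p \<in> primes_I d \<kappa> \<tau> N"
  define r where "r = r_param d \<kappa> \<eta> N"
  have setq: "{(x, L). x \<in> S \<and> L \<in> tuples r S \<and> good d r p x L}
     = {(x,L). x\<in>S \<and> L \<in> {..<r} \<rightarrow>\<^sub>E S \<and> (\<exists>i<r. res_class d p (L i) = res_class d p x)}"
    unfolding tuples_def good_iff by simp
  show "1/2 * real (card S) ^ (r_param d \<kappa> \<eta> N + 1) \<le> real (card {(x, L). x \<in> S \<and> L \<in> tuples (r_param d \<kappa> \<eta> N) S \<and>
                               good d (r_param d \<kappa> \<eta> N) p x L})"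
  proof (cases "finite S")
    case False then show ?thesis by simp
  next
    case True
    have m1: "num_classes d p S \<ge> 1" unfolding num_classes_def using True ne
      by (simp add: Suc_le_eq card_gt_0_iff)
    have "real r \<ge> 2 * real (num_classes d p S)"
      unfolding r_def using param[OF assms d t eta p _ m1] cls p by blast
    then have "real r \<ge> 2 * real (card (res_class d p ` S))" by (simp add: num_classes_def)
    from comb[OF True ne this] show ?thesis unfolding setq[unfolded r_def] r_def .
  qed
qed

end
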